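(* Let $k\ge1$ and $m\in\mathbb N$. If $A\subset\mathbb N$ is an SG$_k$ set, then $A\cap m\mathbb N$ is an SG$_k$ set. If $B\subset\mathbb N$ is an SG$_k^*$ set, then $B\cap m\mathbb N$ is an SG$_k^*$ set.
   Context: $\mathbb N=\{1,2,\dots\}$. For $k\ge0$, $\mathcal S_k$ is the family of finite non-empty $\alpha\subset\mathbb N$ such that for every $i\in\alpha$, either $i=\max\alpha$ or there is $j\in\alpha$ with $i<j\le i+k$. For a sequence $(n_i)$ of positive integers, $n_\alpha=\sum_{i\in\alpha}n_i$ and $\mathrm{SG}_k(n_i)=\{n_\alpha:\alpha\in\mathcal S_k\}$. A set $A\subset\mathbb N$ is SG$_k$ if $A\supseteq\mathrm{SG}_k(n_i)$ for some sequence $(n_i)$ of positive integers. A set $B\subset\mathbb N$ is SG$_k^*$ if $B\cap A\ne\emptyset$ for every SG$_k$ set $A$, equivalently if for every sequence $(n_i)$ of positive integers there is $\alpha\in\mathcal S_k$ with $n_\alpha\in B$. *)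

theory Defs
  imports Main
begin

text \<open>Positive integers are represented in nat; the paper's N = {1,2,...} is the set
  {n. n \<ge> 1}. Sequences (n_i) indexed by i \<in> N are functions nat \<Rightarrow> nat whose
  value at 0 is irrelevant.\<close>

definition S_fam :: "nat \<Rightarrow> nat set set" where
  "S_fam k = {\<alpha>. finite \<alpha> \<and> \<alpha> \<noteq> {} \<and> \<alpha> \<subseteq> {1..} \<and>
      (\<forall>i\<in>\<alpha>. i = Max \<alpha> \<or> (\<exists>j\<in>\<alpha>. i < j \<and> j \<le> i + k))}"

definition SG :: "nat \<Rightarrow> (nat \<Rightarrow> nat) \<Rightarrow> nat set" where
  "SG k n = {(\<Sum>i\<in>\<alpha>. n i) | \<alpha>. \<alpha> \<in> S_fam k}"

definition pos_seq :: "(nat \<Rightarrow> nat) \<Rightarrow> bool" where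
  "pos_seq n \<longleftrightarrow> (\<forall>i\<ge>1. n i > 0)"

definition is_SG :: "nat \<Rightarrow> nat set \<Rightarrow> bool" where
  "is_SG k A \<longleftrightarrow> A \<subseteq> {1..} \<and> (\<exists>n. pos_seq n \<and> SG k n \<subseteq> A)"

definition is_SG_star :: "nat \<Rightarrow> nat set \<Rightarrow> bool" where
  "is_SG_star k B \<longleftrightarrow> B \<subseteq> {1..} \<and> (\<forall>A. is_SG k A \<longrightarrow> B \<inter> A \<noteq> {})"

definition multiples :: "nat \<Rightarrow> nat set" where
  "multiples m = {m * j | j. j \<ge> 1}"

end

theory Submission
  imports Defs
begin

definition laneS :: "(nat \<Rightarrow> nat) \<Rightarrow> nat \<Rightarrow> nat \<Rightarrow> nat" where
  "laneS n k x = (\<Sum>y\<in>{y. 1 \<le> y \<and> y \<le> x \<and> y mod k = x mod k}. n y)"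

lemma laneS_split:
  assumes "a < b" "a mod k = b mod k"
  shows "laneS n k b = laneS n k a + (\<Sum>y\<in>{y. a < y \<and> y \<le> b \<and> y mod k = b mod k}. n y)"
proof -
  have e: "{y. 1 \<le> y \<and> y \<le> b \<and> y mod k = b mod k} =
     {y. 1 \<le> y \<and> y \<le> a \<and> y mod k = a mod k} \<union> {y. a < y \<and> y \<le> b \<and> y mod k = b mod k}"
    using assms by auto
  have f1: "finite {y. 1 \<le> y \<and> y \<le> a \<and> y mod k = a mod k}" by (rule finite_subset[of _ "{..a}"]) auto
  have f2: "finite {y. a < y \<and> y \<le> b \<and> y mod k = b mod k}" by (rule finite_subset[of _ "{..b}"]) auto
  show ?thesis unfolding laneS_def e
    by (rule sum.union_disjoint[OF f1 f2]) auto
qed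

lemma my_inf_unb: "infinite (S::nat set) \<longleftrightarrow> (\<forall>a. \<exists>x>a. x \<in> S)"
  unfolding finite_nat_set_iff_bounded by (meson not_less_eq order_less_asym)

lemma modgap: "(i::nat) mod k = j mod k \<Longrightarrow> i < j \<Longrightarrow> i + k \<le> j"
proof -
  assume a: "i mod k = j mod k" "i < j"
  hence "k dvd j - i" using mod_eq_dvd_iff_nat[of i j k] by simp
  hence "k \<le> j - i" using a(2) by (intro dvd_imp_le) auto
  thus ?thesis using a(2) by linarith
qed

lemma pigeon:
  fixes f :: "nat \<Rightarrow> nat"
  assumes "k \<ge> 1" "m \<ge> 1"
  shows "\<exists>r. \<forall>L<k. infinite {x. x mod k = L \<and> f x mod m = r L}"
proof -
  have "\<exists>c. infinite {x. x mod k = L \<and> f x mod m = c}" if "L < k" for L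
  proof (rule ccontr)
    assume "\<not> ?thesis"
    hence fin: "\<And>c. finite {x. x mod k = L \<and> f x mod m = c}" by blast
    have "{x. x mod k = L} = (\<Union>c<m. {x. x mod k = L \<and> f x mod m = c})"
      using assms by auto
    hence "finite {x. x mod k = L}" using fin by auto
    moreover have "infinite {x. x mod k = L}"
      unfolding my_inf_unb
    proof
      fix a show "\<exists>x>a. x \<in> {x. x mod k = L}"
      proof (intro exI conjI)
        have "1 * (a+1) \<le> k*(a+1)" using assms(1) by (intro mult_right_mono) auto
        thus "a < k*(a+1)+L" by simp
        have "(k*(a+1)+L) mod k = L mod k" by (metis mod_mult_self3 mult.commute)
        thus "k*(a+1)+L \<in> {x. x mod k = L}" using that by simp
      qed
    qed
    ultimately show False by blast
  qed
  hence "\<forall>L. \<exists>c. L < k \<longrightarrow> infinite {x. x mod k = L \<and> f x mod m = c}" by blast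
  from choice[OF this] show ?thesis by blast
qed

lemma part1:
  fixes k m :: nat and A :: "nat set"
  assumes k: "k \<ge> 1" and m: "m \<ge> 1" and A: "is_SG k A"
  shows "is_SG k (A \<inter> multiples m)"
proof -
  obtain n where pn: "pos_seq n" and SGA: "SG k n \<subseteq> A" and A1: "A \<subseteq> {1..}"
    using A unfolding is_SG_def by blast
  define f where "f = laneS n k"
  obtain r where r: "\<And>L. L<k \<Longrightarrow> infinite {x. x mod k = L \<and> f x mod m = r L}"
    using pigeon[OF k m, of f] by blast
  define G where "G = {x. f x mod m = r (x mod k)}"
  have ex: "\<exists>x. x \<in> G \<and> x mod k = L \<and> x > a" if "L < k" for L a
  proof -
    have "infinite {x. x mod k = L \<and> f x mod m = r L}" using r that by blast
    then obtain x where "x > a" "x mod k = L \<and> f x mod m = r L"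
      unfolding my_inf_unb by blast
    thus ?thesis unfolding G_def by auto
  qed
  define step where "step a = (SOME x. x \<in> G \<and> x mod k = (a+1) mod k \<and> x > a + k)" for a
  have stepP: "step a \<in> G \<and> step a mod k = (a+1) mod k \<and> step a > a + k" for a
  proof -
    have "(a+1) mod k < k" using k by auto
    from ex[OF this, of "a+k"] show ?thesis unfolding step_def by (rule someI_ex)
  qed
  define x0 where "x0 = (SOME x. x \<in> G)"
  have "\<exists>x. x \<in> G" using ex[of 0 0] k by auto
  hence x0: "x0 \<in> G" unfolding x0_def by (rule someI_ex)
  define M where "M i = (step ^^ i) x0" for i
  have MS: "M (Suc i) = step (M i)" for i unfolding M_def by simp
  have MG: "M i \<in> G" for i by (cases i) (auto simp: MS stepP M_def x0)
  have Mlane: "M i mod k = (M 0 + i) mod k" for i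
    by (induction i) (auto simp: MS stepP, metis mod_Suc_eq)
  have Mlt: "i < j \<Longrightarrow> M i + k < M j" for i j
  proof (induction j)
    case 0 then show ?case by simp
  next
    case (Suc j) then show ?case using stepP[of "M j"] MS[of j]
      by (cases "i = j") auto
  qed
  have Mle: "i \<le> j \<Longrightarrow> M i \<le> M j" for i j using Mlt[of i j] by (cases "i = j") auto
  have Mlk: "M (i+k) mod k = M i mod k" for i using Mlane[of "i+k"] Mlane[of i] by (simp add: add.assoc[symmetric] )
  define D where "D i = {y. M i < y \<and> y \<le> M (i+k) \<and> y mod k = M (i+k) mod k}" for i
  define n' where "n' i = sum n (D i)" for i
  have finD: "finite (D i)" for i unfolding D_def by (rule finite_subset[of _ "{..M(i+k)}"]) auto
  have MinD: "M (i+k) \<in> D i" for i unfolding D_def using Mlt[of i "i+k"] k by auto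
  have D1: "D i \<subseteq> {1..}" for i unfolding D_def by auto
  have n'pos: "n' i > 0" for i
  proof -
    have "n (M (i+k)) > 0" using pn D1[of i] MinD[of i] unfolding pos_seq_def by auto
    thus ?thesis unfolding n'_def using finD[of i] MinD[of i]
      using member_le_sum[of "M (i+k)" "D i" n] by (meson less_le_trans zero_le)
  qed
  have n'dvd: "m dvd n' i" for i
  proof -
    have lt: "M i < M (i+k)" using Mlt[of i "i+k"] k by auto
    have sp: "f (M (i+k)) = f (M i) + n' i"
      unfolding f_def n'_def D_def using laneS_split[OF lt] Mlk[of i] by simp
    have "f (M (i+k)) mod m = f (M i) mod m" using MG[of i] MG[of "i+k"] Mlk[of i] unfolding G_def by simp
    with sp have "(f (M i)) mod m = (f (M i) + n' i) mod m" by simp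
    thus ?thesis using mod_eq_dvd_iff_nat[of "f (M i)" "f (M i) + n' i" m] by simp
  qed
  have Ddisj: "D i \<inter> D j = {}" if "i \<noteq> j" for i j
  proof (rule ccontr)
    assume "D i \<inter> D j \<noteq> {}"
    then obtain y where y: "y \<in> D i" "y \<in> D j" by blast
    have lane: "M (i+k) mod k = M (j+k) mod k" using y unfolding D_def by auto
    have "(M 0 + i) mod k = (M 0 + j) mod k" using lane Mlk[of i] Mlk[of j] Mlane[of i] Mlane[of j] by simp
    hence ij: "i mod k = j mod k" by (simp add: nat_mod_eq_iff)
    show False
    proof (cases "i < j")
      case True
      with ij have "i + k \<le> j" using modgap[of i k j] by simp
      hence "M (i+k) \<le> M j" using Mle by blast
      thus False using y unfolding D_def by auto
    next
      case False
      with that have "j < i" by auto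
      with ij have "j + k \<le> i" using modgap[of j k i] by simp
      hence "M (j+k) \<le> M i" using Mle by blast
      thus False using y unfolding D_def by auto
    qed
  qed
  have "SG k n' \<subseteq> A \<inter> multiples m"
  proof
    fix s assume "s \<in> SG k n'"
    then obtain a where a: "a \<in> S_fam k" and s: "s = (\<Sum>i\<in>a. n' i)" unfolding SG_def by blast
    have fa: "finite a" "a \<noteq> {}" using a unfolding S_fam_def by auto
    define U where "U = \<Union> (D ` a)"
    have sU: "s = sum n U" unfolding s U_def n'_def
      by (rule sum.UNION_disjoint[symmetric]) (use fa finD Ddisj in auto)
    have finU: "finite U" unfolding U_def using fa finD by auto
    have UmaxM: "\<And>y. y \<in> U \<Longrightarrow> y \<le> M (Max a + k)"
    proof -
      fix y assume "y \<in> U"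
      then obtain i where "i \<in> a" "y \<in> D i" unfolding U_def by auto
      hence "y \<le> M (i+k)" "i \<le> Max a" using fa unfolding D_def by auto
      thus "y \<le> M (Max a + k)" using Mle[of "i+k" "Max a + k"] by auto
    qed
    have MU: "M (Max a + k) \<in> U" using MinD[of "Max a"] Max_in[OF fa(1) fa(2)] unfolding U_def by blast
    have MaxU: "Max U = M (Max a + k)"
      using UmaxM MU finU by (intro Max_eqI) auto
    have "U \<in> S_fam k" unfolding S_fam_def
    proof (intro CollectI conjI ballI)
      show "finite U" by (rule finU)
      show "U \<noteq> {}" using fa MinD unfolding U_def by auto
      show "U \<subseteq> {1..}" using D1 unfolding U_def by auto
      fix y assume yU: "y \<in> U"
      then obtain i where i: "i \<in> a" "y \<in> D i" unfolding U_def by auto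
      show "y = Max U \<or> (\<exists>j\<in>U. y < j \<and> j \<le> y + k)"
      proof (cases "y < M (i+k)")
        case True
        have "y mod k = M (i+k) mod k" using i(2) unfolding D_def by simp
        hence "y + k \<le> M (i+k)" using modgap[of y k "M (i+k)"] True by simp
        hence "y + k \<in> D i" using i k unfolding D_def by auto
        thus ?thesis using i k unfolding U_def by (intro disjI2 bexI[of _ "y+k"]) auto
      next
        case False
        hence yM: "y = M (i+k)" using i unfolding D_def by auto
        show ?thesis
        proof (cases "i = Max a")
          case True thus ?thesis using MaxU yM by auto
        next
          case False
          with a i obtain i2 where i2: "i2 \<in> a" "i < i2" "i2 \<le> i + k" unfolding S_fam_def by blast
          define d where "d = (M (i2+k) + k - y mod k) mod k"
          define z where "z = y + (if d = 0 then k else d)"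
          have dk: "d < k" using k unfolding d_def by auto
          have zmod: "z mod k = M (i2+k) mod k"
          proof -
            have e: "y mod k + (M (i2+k) + k - y mod k) = M (i2+k) + k"
              using mod_less_divisor[of k y] k by linarith
            have "z mod k = (y + d) mod k" unfolding z_def by (cases "d = 0") auto
            also have "\<dots> = (y mod k + (M (i2+k) + k - y mod k)) mod k" unfolding d_def by (simp add: mod_add_right_eq mod_add_left_eq)
            also have "\<dots> = (M (i2+k) + k) mod k" by (simp only: e)
            finally show ?thesis by simp
          qed
          have zb: "y < z" "z \<le> y + k" unfolding z_def using dk by auto
          have "M i2 \<le> M (i+k)" using Mle i2 by auto
          moreover have "M (i+k) + k < M (i2+k)" using Mlt i2 by auto
          ultimately have "z \<in> D i2" unfolding D_def using zb zmod yM by auto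
          thus ?thesis using zb i2 unfolding U_def by auto
        qed
      qed
    qed
    hence "s \<in> SG k n" unfolding SG_def sU by blast
    hence sA: "s \<in> A" using SGA by auto
    have "m dvd s" unfolding s using n'dvd by (simp add: dvd_sum)
    moreover have "s > 0" unfolding s using fa n'pos by (simp add: sum_pos)
    ultimately have "\<exists>q. s = m * q \<and> q \<ge> 1" by auto
    then obtain q where "s = m * q" "q \<ge> 1" by blast
    hence "s \<in> multiples m" unfolding multiples_def by auto
    with sA show "s \<in> A \<inter> multiples m" by auto
  qed
  moreover have "pos_seq n'" unfolding pos_seq_def using n'pos by auto
  ultimately show ?thesis unfolding is_SG_def using A1 by blast
qed

theorem corollary3p3:
  fixes k m :: nat and A B :: "nat set"
  assumes "k \<ge> 1" and "m \<ge> 1"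
  shows "(is_SG k A \<longrightarrow> is_SG k (A \<inter> multiples m)) \<and>
         (is_SG_star k B \<longrightarrow> is_SG_star k (B \<inter> multiples m))"
proof (intro conjI impI)
  show "is_SG k A \<Longrightarrow> is_SG k (A \<inter> multiples m)" using part1 assms by blast
next
  assume B: "is_SG_star k B"
  show "is_SG_star k (B \<inter> multiples m)" unfolding is_SG_star_def
  proof (intro conjI allI impI)
    show "B \<inter> multiples m \<subseteq> {1..}" using B unfolding is_SG_star_def by auto
    fix A assume "is_SG k A"
    hence "is_SG k (A \<inter> multiples m)" using part1 assms by blast
    hence "B \<inter> (A \<inter> multiples m) \<noteq> {}" using B unfolding is_SG_star_def by blast
    thus "B \<inter> multiples m \<inter> A \<noteq> {}" by blast
  qed
qed

end
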